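(* Let $m\geq 2$, $n>1$ and $p\geq 1$ be integers and let $a_1,\ldots,a_m$ be positive integers with $\prod_{i=1}^m a_i\equiv 1\pmod 2$. The graph $a_1H_{n,p}\otimes a_2H_{n,p}\otimes\cdots\otimes a_mH_{n,p}$ is distance magic if and only if $n\equiv 0\pmod 2$ or $n\equiv p\equiv 1\pmod 2$.
   Context: A graph $G$ on $v$ vertices is distance magic if there is a bijection $f:V(G)\to\{1,\ldots,v\}$ and a constant $k$ such that for every vertex $x$, $\sum_{y\in N(x)}f(y)=k$, where $N(x)$ is the set of neighbours of $x$. $H_{n,p}$ denotes the complete multipartite graph with $p$ partite sets each of size $n$; $aH$ denotes the disjoint union of $a$ copies of $H$. The Kronecker (tensor) product $G\otimes H$ has vertex set $V(G)\times V(H)$, with $(g,h)\sim(g',h')$ iff $gg'\in E(G)$ and $hh'\in E(H)$. *)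

theory Defs
  imports Main
begin

text \<open>A (simple) graph is represented by a vertex set together with an adjacency
  relation; only adjacencies between vertices of the vertex set matter.\<close>
type_synonym 'a graph = "'a set \<times> ('a \<Rightarrow> 'a \<Rightarrow> bool)"

definition nbhd :: "'a graph \<Rightarrow> 'a \<Rightarrow> 'a set" where
  "nbhd G x = {y \<in> fst G. snd G x y}"

definition distance_magic :: "'a graph \<Rightarrow> bool" where
  "distance_magic G \<longleftrightarrow> finite (fst G) \<and>
     (\<exists>(f :: 'a \<Rightarrow> nat) (k :: nat). bij_betw f (fst G) {1..card (fst G)} \<and>
        (\<forall>x \<in> fst G. (\<Sum>y \<in> nbhd G x. f y) = k))"

text \<open>Complete multipartite graph H_{n,p}: p parts (index j) of size n (index k).\<close>
definition cmp_graph :: "nat \<Rightarrow> nat \<Rightarrow> (nat \<times> nat) graph" where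
  "cmp_graph n p = ({(j, k). j < p \<and> k < n}, \<lambda>(j, k) (j', k'). j \<noteq> j')"

definition copies :: "nat \<Rightarrow> 'a graph \<Rightarrow> (nat \<times> 'a) graph" where
  "copies a G = ({(c, x). c < a \<and> x \<in> fst G}, \<lambda>(c, x) (d, y). c = d \<and> snd G x y)"

definition kron_list :: "'a graph list \<Rightarrow> 'a list graph" where
  "kron_list Gs = ({xs. length xs = length Gs \<and> (\<forall>i < length Gs. xs ! i \<in> fst (Gs ! i))},
                   \<lambda>xs ys. \<forall>i < length Gs. snd (Gs ! i) (xs ! i) (ys ! i))"

end

theory Submission
  imports Defs
begin


definition CS :: "nat \<Rightarrow> nat \<Rightarrow> nat \<Rightarrow> (nat \<times> nat \<times> nat) set" where
  "CS a n p = {x. fst x < a \<and> fst (snd x) < p \<and> snd (snd x) < n}"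

definition cadj :: "nat \<times> nat \<times> nat \<Rightarrow> nat \<times> nat \<times> nat \<Rightarrow> bool" where
  "cadj x y = (fst x = fst y \<and> fst (snd x) \<noteq> fst (snd y))"

lemma fst_kron: "fst (kron_list (map (\<lambda>i. copies (a i) (cmp_graph n p)) [0..<m]))
   = {xs. length xs = m \<and> (\<forall>i<m. xs!i \<in> CS (a i) n p)}"
  by (auto simp: kron_list_def copies_def cmp_graph_def CS_def mem_Times_iff)

lemma snd_kron: "snd (kron_list (map (\<lambda>i. copies (a i) (cmp_graph n p)) [0..<m])) xs ys
   = (\<forall>i<m. cadj (xs!i) (ys!i))"
  by (simp add: kron_list_def copies_def cmp_graph_def cadj_def split_beta)

lemma card_lists_nth:
  assumes "\<forall>i<m. finite (S i)"
  shows "finite {xs. length xs = m \<and> (\<forall>i<m. xs!i \<in> S i)} \<and>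
         card {xs. length xs = m \<and> (\<forall>i<m. xs!i \<in> S i)} = (\<Prod>i<m. card (S i))"
  using assms
proof (induction m)
  case 0
  have "{xs. length xs = 0 \<and> (\<forall>i<0. xs!i \<in> S i)} = {[]}" by auto
  then show ?case by simp
next
  case (Suc m)
  let ?A = "{xs. length xs = m \<and> (\<forall>i<m. xs!i \<in> S i)}"
  have IH: "finite ?A" "card ?A = (\<Prod>i<m. card (S i))" using Suc by auto
  have eq: "{xs. length xs = Suc m \<and> (\<forall>i<Suc m. xs!i \<in> S i)} = (\<lambda>(xs,x). xs @ [x]) ` (?A \<times> S m)"
  proof
    show "{xs. length xs = Suc m \<and> (\<forall>i<Suc m. xs!i \<in> S i)} \<subseteq> (\<lambda>(xs,x). xs @ [x]) ` (?A \<times> S m)"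
    proof
      fix ys assume ys: "ys \<in> {xs. length xs = Suc m \<and> (\<forall>i<Suc m. xs!i \<in> S i)}"
      then have ne: "ys \<noteq> []" by auto
      have "ys = butlast ys @ [last ys]" using ne by simp
      moreover have "butlast ys \<in> ?A" using ys by (auto simp: nth_butlast)
      moreover have "last ys \<in> S m" using ys ne by (auto simp: last_conv_nth)
      ultimately show "ys \<in> (\<lambda>(xs,x). xs @ [x]) ` (?A \<times> S m)" by force
    qed
  next
    show "(\<lambda>(xs,x). xs @ [x]) ` (?A \<times> S m) \<subseteq> {xs. length xs = Suc m \<and> (\<forall>i<Suc m. xs!i \<in> S i)}"
      by (auto simp: nth_append less_Suc_eq)
  qed
  have inj: "inj_on (\<lambda>(xs,x). xs @ [x]) (?A \<times> S m)" by (auto simp: inj_on_def)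
  show ?case using IH Suc.prems unfolding eq
    by (simp add: card_image[OF inj] card_cartesian_product)
qed



definition sg :: "nat \<Rightarrow> nat \<Rightarrow> nat" where
  "sg B b = (if b \<le> B div 2 then b + B div 2 else b - B div 2 - 1)"

lemma sg_facts:
  assumes "b < B" "odd B"
  shows "sg B b < B" "B div 2 \<le> b + sg B b" "b + sg B b \<le> 3 * (B div 2)"
proof -
  obtain s where s: "B = 2*s+1" using assms(2) oddE by blast
  then have d: "B div 2 = s" by simp
  show "sg B b < B" "B div 2 \<le> b + sg B b" "b + sg B b \<le> 3 * (B div 2)"
    using assms(1) unfolding sg_def d s by auto
qed
lemma sg_inj:
  assumes "b < B" "b' < B" "odd B" "sg B b = sg B b'"
  shows "b = b'"
proof -
  obtain s where s: "B = 2*s+1" using assms(3) oddE by blast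
  then have d: "B div 2 = s" by simp
  show ?thesis using assms(1,2,4) unfolding sg_def d s by (auto split: if_splits)
qed
lemma par_contra: "2 * (x::nat) + 1 \<noteq> 2 * y" by presburger
lemma sg_inj2_aux:
  fixes b b' s :: nat
  assumes "b < 2*s+1" "b' < 2*s+1"
    "b + (if b \<le> s then b + s else b - s - 1) = b' + (if b' \<le> s then b' + s else b' - s - 1)"
  shows "b = b'"
proof (cases "b \<le> s")
  case True
  show ?thesis
  proof (cases "b' \<le> s")
    case True then show ?thesis using \<open>b \<le> s\<close> assms(3) by simp
  next
    case False
    then have "2 * b + 2 * s + 1 = 2 * b'" using True assms(3) by simp
    then have "2 * (b + s) + 1 = 2 * b'" by simp
    then show ?thesis using par_contra by blast
  qed
next
  case F: False
  show ?thesis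
  proof (cases "b' \<le> s")
    case True
    then have "2 * b' + 2 * s + 1 = 2 * b" using F assms(3) by simp
    then have "2 * (b' + s) + 1 = 2 * b" by simp
    then show ?thesis using par_contra by blast
  next
    case False then show ?thesis using F assms(3) by simp
  qed
qed

lemma sg_inj2:
  assumes "b < B" "b' < B" "odd B" "b + sg B b = b' + sg B b'"
  shows "b = b'"
proof -
  obtain s where s: "B = 2*s+1" using assms(3) oddE by blast
  then have d: "B div 2 = s" by simp
  have e: "b + (if b \<le> s then b + s else b - s - 1) = b' + (if b' \<le> s then b' + s else b' - s - 1)"
    using assms(4) unfolding sg_def d .
  show ?thesis using assms(1,2) e unfolding s by (rule sg_inj2_aux)
qed

definition pii :: "nat \<Rightarrow> nat \<Rightarrow> nat \<Rightarrow> nat \<Rightarrow> nat" where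
  "pii N B q b = (if odd N \<and> q < 3 then (if q = 0 then b else if q = 1 then sg B b
      else 3 * (B div 2) - b - sg B b) else if even q then b else B - 1 - b)"

definition LL :: "nat \<Rightarrow> nat \<Rightarrow> nat \<Rightarrow> nat \<Rightarrow> nat" where
  "LL N B b q = q * B + pii N B q b + 1"

lemma pii_lt:
  assumes "b < B" "even N \<or> odd B"
  shows "pii N B q b < B"
proof (cases "odd N \<and> q < 3")
  case True
  then have oB: "odd B" using assms by auto
  obtain s where s: "B = 2*s+1" using oB oddE by blast
  then have d: "B div 2 = s" by simp
  show ?thesis using assms sg_facts[OF assms(1) oB] True unfolding pii_def d by (auto simp: s)
next
  case False
  then show ?thesis using assms unfolding pii_def by auto
qed

lemma pii_inj:
  assumes "b < B" "b' < B" "even N \<or> odd B" "pii N B q b = pii N B q b'"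
  shows "b = b'"
proof (cases "odd N \<and> q < 3")
  case oc: True
  then have oB: "odd B" using assms by auto
  show ?thesis
  proof (cases "q = 0")
    case True then show ?thesis using assms by (auto simp: pii_def split: if_splits)
  next
    case q0: False
    show ?thesis
    proof (cases "q = 1")
      case True then show ?thesis using assms oB True q0 oc sg_inj[of b B b'] by (simp add: pii_def)
    next
      case False
      then have "3 * (B div 2) - b - sg B b = 3 * (B div 2) - b' - sg B b'"
        using assms \<open>odd N \<and> q < 3\<close> q0 by (simp add: pii_def)
      then have "b + sg B b = b' + sg B b'"
        using sg_facts[OF assms(1) oB] sg_facts[OF assms(2) oB] by linarith
      then show ?thesis using sg_inj2[OF assms(1,2) oB] by simp
    qed
  qed
next
  case False
  then show ?thesis using assms by (simp add: pii_def split: if_splits)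
qed

lemma pair_sum:
  assumes "b < B"
  shows "(\<Sum>q\<in>{(c::nat)..<c+2*r}. (if even q then b else B - 1 - b)) = r * (B - 1)"
proof (induction r)
  case 0 then show ?case by simp
next
  case (Suc r)
  have "c + 2 * Suc r = Suc (Suc (c + 2*r))" by simp
  then have "(\<Sum>q\<in>{c..<c+2*Suc r}. (if even q then b else B - 1 - b))
     = (\<Sum>q\<in>{c..<c+2*r}. (if even q then b else B - 1 - b))
       + (if even (c+2*r) then b else B - 1 - b) + (if even (Suc (c+2*r)) then b else B - 1 - b)"
    by simp
  also have "\<dots> = r * (B - 1) + (B - 1)" using Suc assms by auto
  finally show ?case by simp
qed

lemma pii_sum:
  assumes "b < B" "even N \<or> (odd B \<and> 3 \<le> N)"
  shows "(\<Sum>q<N. pii N B q b) = (if odd N then 3 * (B div 2) + ((N - 3) div 2) * (B - 1)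
            else (N div 2) * (B - 1))"
proof (cases "odd N")
  case True
  then have N3: "3 \<le> N" and oB: "odd B" using assms by auto
  define r where "r = (N - 3) div 2"
  have r: "N = 3 + 2 * r" unfolding r_def using True N3 by presburger
  have "(\<Sum>q<N. pii N B q b) = (\<Sum>q\<in>{0..<3}. pii N B q b) + (\<Sum>q\<in>{3..<3+2*r}. pii N B q b)"
    using r by (simp add: atLeast0LessThan[symmetric] sum.atLeastLessThan_concat)
  also have "(\<Sum>q\<in>{0..<3}. pii N B q b) = 3 * (B div 2)"
    using True assms oB sg_facts[OF assms(1) oB] by (simp add: numeral_3_eq_3 pii_def)
  also have "(\<Sum>q\<in>{3..<3+2*r}. pii N B q b) = (\<Sum>q\<in>{3..<3+2*r}. (if even q then b else B - 1 - b))"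
    by (rule sum.cong) (auto simp: pii_def)
  also have "\<dots> = r * (B - 1)" by (rule pair_sum[OF assms(1)])
  finally show ?thesis using True r by simp
next
  case False
  then obtain r where r: "N = 0 + 2 * r" by auto
  have "(\<Sum>q<N. pii N B q b) = (\<Sum>q\<in>{0..<0+2*r}. (if even q then b else B - 1 - b))"
    using False r by (simp add: atLeast0LessThan[symmetric] pii_def)
  also have "\<dots> = r * (B - 1)" by (rule pair_sum[OF assms(1)])
  finally show ?thesis using False r by simp
qed

lemma LL_row:
  assumes "b < B" "even N \<or> (odd B \<and> 3 \<le> N)"
  shows "(\<Sum>q<N. LL N B b q) = (\<Sum>q<N. LL N B 0 q)"
proof -
  have B0: "0 < B" using assms by auto
  have "(\<Sum>q<N. LL N B b q) = (\<Sum>q<N. q * B + 1) + (\<Sum>q<N. pii N B q b)"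
    unfolding LL_def sum.distrib[symmetric] by (rule sum.cong) auto
  moreover have "(\<Sum>q<N. LL N B 0 q) = (\<Sum>q<N. q * B + 1) + (\<Sum>q<N. pii N B q 0)"
    unfolding LL_def sum.distrib[symmetric] by (rule sum.cong) auto
  ultimately show ?thesis using pii_sum[OF assms] pii_sum[OF B0 assms(2)] by simp
qed

lemma divmod_uniq:
  fixes q q' x x' B :: nat
  assumes "x < B" "x' < B" "q * B + x = q' * B + x'"
  shows "q = q' \<and> x = x'"
proof -
  have "(q * B + x) div B = (q' * B + x') div B" using assms(3) by simp
  then have "q = q'" using assms(1,2) by simp
  then show ?thesis using assms(3) by simp
qed

lemma LL_inj:
  assumes "b < B" "b' < B" "even N \<or> odd B" "LL N B b q = LL N B b' q'"
  shows "b = b' \<and> q = q'"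
proof -
  have "q = q' \<and> pii N B q b = pii N B q' b'"
    using divmod_uniq[OF pii_lt[OF assms(1,3)] pii_lt[OF assms(2,3)]] assms(4) by (simp add: LL_def)
  then show ?thesis using pii_inj[OF assms(1,2,3)] by auto
qed

lemma LL_range:
  assumes "b < B" "q < N" "even N \<or> odd B"
  shows "LL N B b q \<in> {1..N * B}"
proof -
  have "pii N B q b < B" by (rule pii_lt[OF assms(1,3)])
  then have "q * B + pii N B q b + 1 \<le> (q + 1) * B" by simp
  also have "\<dots> \<le> N * B" using assms(2) by (intro mult_right_mono) auto
  finally show ?thesis by (simp add: LL_def)
qed



lemma CS_eq: "CS a n p = {..<a} \<times> ({..<p} \<times> {..<n})"
  by (auto simp: CS_def)

lemma CS_card: "finite (CS a n p) \<and> card (CS a n p) = a * (p * n)"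
  by (simp add: CS_eq card_cartesian_product)

lemma T_card:
  assumes "z \<in> CS a n p"
  shows "finite {y \<in> CS a n p. cadj z y} \<and> card {y \<in> CS a n p. cadj z y} = (p - 1) * n"
proof -
  have "{y \<in> CS a n p. cadj z y} = {fst z} \<times> (({..<p} - {fst (snd z)}) \<times> {..<n})"
    using assms by (auto simp: CS_def cadj_def)
  then show ?thesis using assms by (simp add: card_cartesian_product CS_def)
qed

lemma cadj_sym: "cadj x y = cadj y x"
  by (auto simp: cadj_def)

lemma V_card:
  "finite {xs. length xs = m \<and> (\<forall>i<m. xs!i \<in> CS (a i) n p)} \<and>
   card {xs. length xs = m \<and> (\<forall>i<m. xs!i \<in> CS (a i) n p)} = (\<Prod>i<m. a i) * (p * n) ^ m"
  using card_lists_nth[of m "\<lambda>i. CS (a i) n p"] CS_card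
  by (simp add: prod.distrib)

lemma nb_card:
  assumes "length x = m" "\<forall>i<m. x!i \<in> CS (a i) n p"
  shows "finite {ys \<in> {xs. length xs = m \<and> (\<forall>i<m. xs!i \<in> CS (a i) n p)}. \<forall>i<m. cadj (x!i) (ys!i)} \<and>
         card {ys \<in> {xs. length xs = m \<and> (\<forall>i<m. xs!i \<in> CS (a i) n p)}. \<forall>i<m. cadj (x!i) (ys!i)} = ((p - 1) * n) ^ m"
proof -
  have eq: "{ys \<in> {xs. length xs = m \<and> (\<forall>i<m. xs!i \<in> CS (a i) n p)}. \<forall>i<m. cadj (x!i) (ys!i)}
     = {ys. length ys = m \<and> (\<forall>i<m. ys!i \<in> {y \<in> CS (a i) n p. cadj (x!i) y})}" by auto
  show ?thesis unfolding eq using card_lists_nth[of m "\<lambda>i. {y \<in> CS (a i) n p. cadj (x!i) y}"] T_card assms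
    by simp
qed


definition gmap :: "(nat \<times> nat \<times> nat) list \<Rightarrow> (nat \<times> nat) list" where
  "gmap xs = map (\<lambda>z. (fst z, fst (snd z))) xs"

lemma gmap_eq_nth:
  assumes "gmap xs = gmap ys" "i < length xs"
  shows "fst (xs!i) = fst (ys!i) \<and> fst (snd (xs!i)) = fst (snd (ys!i))"
proof -
  have "length xs = length ys" using assms(1) unfolding gmap_def by (metis length_map)
  then show ?thesis using assms nth_map[of i xs "\<lambda>z. (fst z, fst (snd z))"]
      nth_map[of i ys "\<lambda>z. (fst z, fst (snd z))"] unfolding gmap_def by auto
qed

lemma fib_card:
  assumes "length x0 = m" "\<forall>i<m. x0!i \<in> CS (a i) n p"
  shows "finite {xs \<in> {xs. length xs = m \<and> (\<forall>i<m. xs!i \<in> CS (a i) n p)}. gmap xs = gmap x0} \<and>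
         card {xs \<in> {xs. length xs = m \<and> (\<forall>i<m. xs!i \<in> CS (a i) n p)}. gmap xs = gmap x0} = n ^ m"
proof -
  let ?F = "\<lambda>i. {fst (x0!i)} \<times> ({fst (snd (x0!i))} \<times> {..<n})"
  have eq: "{xs \<in> {xs. length xs = m \<and> (\<forall>i<m. xs!i \<in> CS (a i) n p)}. gmap xs = gmap x0}
     = {xs. length xs = m \<and> (\<forall>i<m. xs!i \<in> ?F i)}"
  proof (intro set_eqI iffI)
    fix xs assume xs: "xs \<in> {xs \<in> {xs. length xs = m \<and> (\<forall>i<m. xs!i \<in> CS (a i) n p)}. gmap xs = gmap x0}"
    show "xs \<in> {xs. length xs = m \<and> (\<forall>i<m. xs!i \<in> ?F i)}"
    proof (simp, intro conjI allI impI)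
      show "length xs = m" using xs by simp
      fix i assume i: "i < m"
      have "fst (xs!i) = fst (x0!i) \<and> fst (snd (xs!i)) = fst (snd (x0!i))"
        using gmap_eq_nth[of xs x0 i] xs i by simp
      moreover have "snd (snd (xs!i)) < n" using xs i by (simp add: CS_def)
      ultimately show "xs ! i \<in> ?F i" by (auto simp: mem_Times_iff)
    qed
  next
    fix xs assume xs: "xs \<in> {xs. length xs = m \<and> (\<forall>i<m. xs!i \<in> ?F i)}"
    have "\<forall>i<m. xs!i \<in> CS (a i) n p" using xs assms by (auto simp: CS_def mem_Times_iff)
    moreover have "gmap xs = gmap x0"
      unfolding gmap_def using xs assms by (auto simp: list_eq_iff_nth_eq mem_Times_iff)
    ultimately show "xs \<in> {xs \<in> {xs. length xs = m \<and> (\<forall>i<m. xs!i \<in> CS (a i) n p)}. gmap xs = gmap x0}"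
      using xs by simp
  qed
  show ?thesis unfolding eq using card_lists_nth[of m ?F]
    by (simp add: card_cartesian_product)
qed



lemma sum_const_nat: "(\<Sum>x\<in>A. (c::nat)) = card A * c" by simp

theorem theorem17:
  fixes m n p :: nat and a :: "nat \<Rightarrow> nat"
  assumes "m \<ge> 2" and "n > 1" and "p \<ge> 1"
    and "\<forall>i < m. a i > 0"
    and "odd (\<Prod>i < m. a i)"
  shows "distance_magic (kron_list (map (\<lambda>i. copies (a i) (cmp_graph n p)) [0..<m]))
         \<longleftrightarrow> (even n \<or> (odd n \<and> odd p))"
proof -
  let ?G = "kron_list (map (\<lambda>i. copies (a i) (cmp_graph n p)) [0..<m])"
  define V where "V = {xs. length xs = m \<and> (\<forall>i<m. xs!i \<in> CS (a i) n p)}"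
  define adj where "adj = (\<lambda>x y. \<forall>i<m. cadj (x!i) (y!i))"
  have fstG: "fst ?G = V" unfolding V_def by (rule fst_kron)
  have nbG: "nbhd ?G x = {y \<in> V. adj x y}" for x
    unfolding nbhd_def fstG adj_def snd_kron by simp
  have finV: "finite V" and cardV: "card V = (\<Prod>i<m. a i) * (p * n) ^ m"
    using V_card[of m a n p] unfolding V_def by auto
  define D where "D = ((p - 1) * n) ^ m"
  have nbfin: "finite {y \<in> V. adj x y}" and nbcard: "card {y \<in> V. adj x y} = D" if "x \<in> V" for x
    using nb_card[of x m a n p] that unfolding V_def adj_def D_def by auto
  have adj_sym: "adj x y = adj y x" for x y unfolding adj_def using cadj_sym by metis
  have m0: "m > 0" using assms(1) by simp
  show ?thesis
  proof
    assume dm: "distance_magic ?G"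
    show "even n \<or> (odd n \<and> odd p)"
    proof (rule ccontr)
      assume "\<not> (even n \<or> (odd n \<and> odd p))"
      then have on: "odd n" and ep: "even p" by auto
      from dm obtain f :: "_ \<Rightarrow> nat" and k where
        bij: "bij_betw f V {1..card V}" and sums: "\<forall>x\<in>V. (\<Sum>y\<in>{y \<in> V. adj x y}. f y) = k"
        unfolding distance_magic_def fstG nbG by blast
      define v where "v = card V"
      have "(\<Sum>x\<in>V. (\<Sum>y\<in>{y \<in> V. adj x y}. f y)) = v * k" using sums unfolding v_def by simp
      moreover have "(\<Sum>x\<in>V. (\<Sum>y\<in>{y \<in> V. adj x y}. f y)) = (\<Sum>x\<in>V. \<Sum>y\<in>V. if adj x y then f y else 0)"
        using finV by (simp add: sum.inter_filter)
      moreover have "\<dots> = (\<Sum>y\<in>V. \<Sum>x\<in>V. if adj x y then f y else 0)" by (rule sum.swap)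
      moreover have "\<dots> = (\<Sum>y\<in>V. f y * D)"
      proof (rule sum.cong[OF refl])
        fix y assume y: "y \<in> V"
        have ee: "{x \<in> V. adj x y} = {x \<in> V. adj y x}" using adj_sym by auto
        have "(\<Sum>x\<in>V. if adj x y then f y else 0) = (\<Sum>x\<in>{x \<in> V. adj x y}. f y)"
          by (subst sum.inter_filter[OF finV, symmetric]) simp
        also have "\<dots> = (\<Sum>x\<in>{x \<in> V. adj y x}. f y)" unfolding ee ..
        also have "\<dots> = f y * D" using nbcard[OF y] by simp
        finally show "(\<Sum>x\<in>V. if adj x y then f y else 0) = f y * D" .
      qed
      moreover have "(\<Sum>y\<in>V. f y * D) = D * (\<Sum>y\<in>V. f y)"
        by (simp add: sum_distrib_left mult.commute)
      moreover have "(\<Sum>y\<in>V. f y) = (\<Sum>i\<in>{1..v}. i)"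
        using sum.reindex_bij_betw[OF bij, of "\<lambda>i. i"] unfolding v_def by simp
      ultimately have eq: "v * k = D * (\<Sum>i\<in>{1..v}. i)" by metis
      have g: "2 * (\<Sum>i\<in>{1..v}. i) = v * (v + 1)"
        using double_gauss_sum_from_Suc_0[of v, where ?'a = nat] by simp
      have vpos: "v > 0" unfolding v_def cardV using assms(2,3,4) by (simp add: prod_pos)
      have "v * (2 * k) = 2 * (v * k)" by simp
      also have "\<dots> = 2 * (D * (\<Sum>i\<in>{1..v}. i))" using eq by simp
      also have "\<dots> = D * (2 * (\<Sum>i\<in>{1..v}. i))" by simp
      also have "\<dots> = D * (v * (v + 1))" using g by simp
      also have "\<dots> = v * (D * (v + 1))" by (simp add: algebra_simps)
      finally have "v * (2 * k) = v * (D * (v + 1))" .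
      then have e2: "2 * k = D * (v + 1)" using vpos by simp
      have "even v" unfolding v_def cardV using ep m0 by simp
      moreover have "odd D" unfolding D_def using on ep assms(3) by (simp add: even_mult_iff)
      ultimately have od: "odd (D * (v + 1))" by simp
      have ev: "even (D * (v + 1))" unfolding e2[symmetric] by simp
      show False using od ev by blast
    qed
  next
    assume H0: "even n \<or> (odd n \<and> odd p)"
    define N where "N = n ^ m"
    define BS where "BS = gmap ` V"
    define B where "B = card BS"
    define fib where "fib t = {x \<in> V. gmap x = t}" for t
    have finBS: "finite BS" unfolding BS_def using finV by simp
    have fibfin: "finite (fib t)" for t unfolding fib_def using finV by simp
    have fibcard: "card (fib t) = N" if "t \<in> BS" for t
    proof -
      from that obtain x0 where x0: "x0 \<in> V" "t = gmap x0" unfolding BS_def by auto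
      show ?thesis using fib_card[of x0 m a n p] x0 unfolding fib_def N_def V_def by auto
    qed
    have cardVB: "card V = B * N"
    proof -
      have "card V = (\<Sum>x\<in>V. 1)" by simp
      also have "\<dots> = (\<Sum>t\<in>BS. \<Sum>x\<in>fib t. 1)"
        unfolding BS_def fib_def by (rule sum.image_gen[OF finV])
      also have "\<dots> = (\<Sum>t\<in>BS. N)" using fibcard by simp
      finally show ?thesis unfolding B_def by simp
    qed
    have Npos: "N > 0" unfolding N_def using assms(2) by simp
    have H: "even N \<or> (odd B \<and> 3 \<le> N)"
    proof (cases "even n")
      case True then show ?thesis unfolding N_def using m0 by simp
    next
      case False
      then have op: "odd p" using H0 by simp
      have "odd (card V)" unfolding cardV using assms(5) False op by (simp add: even_mult_iff)
      then have "odd B" unfolding cardVB by simp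
      moreover have "3 \<le> N"
      proof -
        have "n \<ge> 3" using False assms(2) by presburger
        moreover have "n \<le> n ^ m" using m0 assms(2) by (simp add: self_le_power)
        ultimately show ?thesis unfolding N_def by simp
      qed
      ultimately show ?thesis by simp
    qed
    then have H': "even N \<or> odd B" by auto
    obtain iB where iB: "bij_betw iB BS {0..<B}" using ex_bij_betw_finite_nat[OF finBS] unfolding B_def by blast
    have "\<forall>t\<in>BS. \<exists>\<phi>. bij_betw \<phi> (fib t) {0..<N}"
    proof
      fix t assume t: "t \<in> BS"
      show "\<exists>\<phi>. bij_betw \<phi> (fib t) {0..<N}"
        using ex_bij_betw_finite_nat[OF fibfin, of t] fibcard[OF t] by simp
    qed
    then obtain Phi where Phi0: "\<forall>t\<in>BS. bij_betw (Phi t) (fib t) {0..<N}"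
      by (rule bchoice[THEN exE])
    have Phi: "\<And>t. t \<in> BS \<Longrightarrow> bij_betw (Phi t) (fib t) {0..<N}" using Phi0 by blast
    define f where "f x = LL N B (iB (gmap x)) (Phi (gmap x) x)" for x
    have gx: "gmap x \<in> BS" if "x \<in> V" for x using that unfolding BS_def by simp
    have xfib: "x \<in> fib (gmap x)" if "x \<in> V" for x using that unfolding fib_def by simp
    have iBlt: "iB (gmap x) < B" if "x \<in> V" for x
      using iB gx[OF that] by (auto simp: bij_betw_def)
    have Philt: "Phi (gmap x) x < N" if "x \<in> V" for x
      using Phi[OF gx[OF that]] xfib[OF that] by (auto simp: bij_betw_def)
    have range: "f ` V \<subseteq> {1..card V}"
    proof
      fix y assume "y \<in> f ` V"
      then obtain x where x: "x \<in> V" "y = f x" by auto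
      show "y \<in> {1..card V}" using LL_range[OF iBlt[OF x(1)] Philt[OF x(1)] H'] x
        unfolding f_def cardVB by (simp add: mult.commute)
    qed
    have inj: "inj_on f V"
    proof (rule inj_onI)
      fix x y assume x: "x \<in> V" and y: "y \<in> V" and e: "f x = f y"
      have 1: "iB (gmap x) = iB (gmap y) \<and> Phi (gmap x) x = Phi (gmap y) y"
        using LL_inj[OF iBlt[OF x] iBlt[OF y] H'] e unfolding f_def by blast
      then have 2: "gmap x = gmap y" using iB gx[OF x] gx[OF y] by (auto simp: bij_betw_def inj_on_def)
      then have "Phi (gmap x) x = Phi (gmap x) y" using 1 by simp
      moreover have "y \<in> fib (gmap x)" using xfib[OF y] 2 by simp
      ultimately show "x = y" using Phi[OF gx[OF x]] xfib[OF x] by (auto simp: bij_betw_def inj_on_def)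
    qed
    have bij: "bij_betw f V {1..card V}"
    proof -
      have "card (f ` V) = card {1..card V}" using card_image[OF inj] by simp
      then have "f ` V = {1..card V}" using card_subset_eq[OF _ range] by simp
      then show ?thesis using inj by (simp add: bij_betw_def)
    qed
    define R where "R = (\<Sum>q<N. LL N B 0 q)"
    have fibsum: "(\<Sum>x\<in>fib t. f x) = R" if "t \<in> BS" for t
    proof -
      have "(\<Sum>x\<in>fib t. f x) = (\<Sum>x\<in>fib t. LL N B (iB t) (Phi t x))"
        by (rule sum.cong) (auto simp: f_def fib_def)
      also have "\<dots> = (\<Sum>q\<in>{0..<N}. LL N B (iB t) q)"
        by (rule sum.reindex_bij_betw[OF Phi[OF that]])
      also have "\<dots> = R" unfolding R_def atLeast0LessThan
        by (rule LL_row[OF _ H]) (use iB that in \<open>auto simp: bij_betw_def\<close>)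
      finally show ?thesis .
    qed
    have nbsum: "(\<Sum>y\<in>{y \<in> V. adj x y}. f y) = (D div N) * R" if x: "x \<in> V" for x
    proof -
      let ?S = "{y \<in> V. adj x y}"
      have fibeq: "{y. y \<in> ?S \<and> gmap y = t} = fib t" if t: "t \<in> gmap ` ?S" for t
      proof -
        from t obtain y0 where y0: "y0 \<in> ?S" "t = gmap y0" by auto
        have "adj x y" if "y \<in> V" "gmap y = gmap y0" for y
        proof -
          have ly: "length y = m" using that V_def by simp
          show ?thesis unfolding adj_def
          proof (intro allI impI)
            fix i assume i: "i < m"
            have e: "fst (y!i) = fst (y0!i) \<and> fst (snd (y!i)) = fst (snd (y0!i))"
              using gmap_eq_nth[OF that(2)] ly i by simp
            have "cadj (x!i) (y0!i)" using y0(1) i unfolding adj_def by simp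
            then show "cadj (x!i) (y!i)" using e unfolding cadj_def by simp
          qed
        qed
        then have "\<And>y. y \<in> V \<and> gmap y = t \<Longrightarrow> adj x y" using y0(2) by blast
        then show ?thesis unfolding fib_def by blast
      qed
      have tBS: "t \<in> BS" if "t \<in> gmap ` ?S" for t using that unfolding BS_def by blast
      have "(\<Sum>y\<in>?S. f y) = (\<Sum>t\<in>gmap ` ?S. \<Sum>y\<in>{y. y \<in> ?S \<and> gmap y = t}. f y)"
        by (rule sum.image_gen[OF nbfin[OF x]])
      also have "\<dots> = (\<Sum>t\<in>gmap ` ?S. R)"
      proof (rule sum.cong[OF refl])
        fix t assume t: "t \<in> gmap ` ?S"
        show "(\<Sum>y\<in>{y. y \<in> ?S \<and> gmap y = t}. f y) = R"
          unfolding fibeq[OF t] by (rule fibsum[OF tBS[OF t]])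
      qed
      also have "\<dots> = card (gmap ` ?S) * R" by (rule sum_const_nat)
      finally have s1: "(\<Sum>y\<in>?S. f y) = card (gmap ` ?S) * R" .
      have "card ?S = (\<Sum>y\<in>?S. 1)" by (rule card_eq_sum)
      also have "\<dots> = (\<Sum>t\<in>gmap ` ?S. \<Sum>y\<in>{y. y \<in> ?S \<and> gmap y = t}. 1)"
        by (rule sum.image_gen[OF nbfin[OF x]])
      also have "\<dots> = (\<Sum>t\<in>gmap ` ?S. N)"
      proof (rule sum.cong[OF refl])
        fix t assume t: "t \<in> gmap ` ?S"
        show "(\<Sum>y\<in>{y. y \<in> ?S \<and> gmap y = t}. 1) = N"
          unfolding fibeq[OF t] card_eq_sum[symmetric] by (rule fibcard[OF tBS[OF t]])
      qed
      also have "\<dots> = card (gmap ` ?S) * N" by (rule sum_const_nat)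
      finally have "card ?S = card (gmap ` ?S) * N" .
      then have dd: "D = card (gmap ` ?S) * N" using nbcard[OF x] by linarith
      have "card (gmap ` ?S) = D div N" unfolding dd using Npos by (rule nonzero_mult_div_cancel_right[symmetric, OF gr_implies_not0])
      then show ?thesis unfolding s1 by (rule arg_cong[where f = "\<lambda>c. c * R"])
    qed
    show "distance_magic ?G"
      unfolding distance_magic_def fstG nbG
    proof (intro conjI exI)
      show "finite V" by (rule finV)
      show "bij_betw f V {1..card V}" by (rule bij)
      show "\<forall>x\<in>V. (\<Sum>y\<in>{y \<in> V. adj x y}. f y) = (D div N) * R" using nbsum by blast
    qed
  qed
qed

end
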